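(* Let $m=2k+1$ with $k\in\mathbb{N}$ and $\beta\in[\frac{2k+3}{2},\frac{k+1+\sqrt{k^2+6k+5}}{2})$. Let $i\in\{1,\ldots,m-1\}$ and let $x$ lie in the $i$-th fixed digit interval $[\frac{(i-1)\beta+m-(i-1)}{\beta(\beta-1)},\frac{i+1}{\beta}]$. If $i\in\{1,\ldots,k\}$ then $T_{\beta,i}(x)<\frac{k\beta+m-k}{\beta(\beta-1)}$, and if $i\in\{k+1,\ldots,m-1\}$ then $T_{\beta,i}(x)>\frac{k+1}{\beta}$.
   Context: $T_{\beta,i}(x)=\beta x-i$. *)

theory Defs
  imports Complex_Main
begin

definition T :: "real \<Rightarrow> nat \<Rightarrow> real \<Rightarrow> real" where
  "T \<beta> i x = \<beta> * x - real i"

end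

theory Submission
  imports Defs
begin

theorem lemma3p5:
  fixes k m i :: nat and \<beta> x :: real
  assumes hm: "m = 2 * k + 1"
    and hb1: "(2 * real k + 3) / 2 \<le> \<beta>"
    and hb2: "\<beta> < (real k + 1 + sqrt (real k ^ 2 + 6 * real k + 5)) / 2"
    and hi: "1 \<le> i" "i \<le> m - 1"
    and hx1: "((real i - 1) * \<beta> + real m - (real i - 1)) / (\<beta> * (\<beta> - 1)) \<le> x"
    and hx2: "x \<le> (real i + 1) / \<beta>"
  shows "(i \<le> k \<longrightarrow> T \<beta> i x < (real k * \<beta> + real m - real k) / (\<beta> * (\<beta> - 1)))
       \<and> (k + 1 \<le> i \<and> i \<le> m - 1 \<longrightarrow> T \<beta> i x > (real k + 1) / \<beta>)"
proof -
  define s where "s = sqrt (real k ^ 2 + 6 * real k + 5)"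
  have s2: "s^2 = real k ^ 2 + 6 * real k + 5" unfolding s_def by simp
  have b1: "\<beta> > 1" using hb1 by (simp add: field_simps)
  have a: "0 \<le> 2*\<beta> - (real k + 1)" using hb1 by (simp add: field_simps)
  have b: "2*\<beta> - (real k + 1) < s" using hb2 unfolding s_def by (simp add: field_simps)
  have "(2*\<beta> - (real k + 1))^2 < s^2"
    using a b by (simp add: power_strict_mono)
  hence key: "\<beta>^2 < (real k + 1)*\<beta> + (real k + 1)" using s2 by (simp add: power2_eq_square algebra_simps)
  have pos: "\<beta> * (\<beta> - 1) > 0" using b1 by simp
  have m: "real m = 2 * real k + 1" using hm by simp
  have p1: "T \<beta> i x \<le> 1" using hx2 b1 unfolding T_def by (simp add: field_simps)
  have p1': "1 < (real k * \<beta> + real m - real k) / (\<beta> * (\<beta> - 1))"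
    using pos key m by (simp add: field_simps power2_eq_square)
  have hx1': "(real i - 1) * \<beta> + real m - (real i - 1) \<le> x * (\<beta> * (\<beta> - 1))"
    using hx1 pos by (simp add: field_simps)
  have lowT: "T \<beta> i x * (\<beta> - 1) \<ge> real m + 1 - \<beta>"
  proof -
    have "T \<beta> i x * (\<beta> - 1) = \<beta> * x * (\<beta> - 1) - real i * (\<beta> - 1)" unfolding T_def by (simp add: algebra_simps)
    thus ?thesis using hx1' by (simp add: algebra_simps)
  qed
  have p2: "T \<beta> i x > (real k + 1) / \<beta>"
  proof -
    have "(real k + 1) * (\<beta> - 1) < \<beta> * (real m + 1 - \<beta>)"
      using key m by (simp add: algebra_simps power2_eq_square)
    also have "\<dots> \<le> \<beta> * (T \<beta> i x * (\<beta> - 1))" using lowT b1 by simp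
    finally have "(real k + 1) * (\<beta> - 1) < (\<beta> * T \<beta> i x) * (\<beta> - 1)" by (simp add: algebra_simps)
    hence "real k + 1 < \<beta> * T \<beta> i x" using b1 by simp
    thus ?thesis using b1 by (simp add: field_simps)
  qed
  show ?thesis using p1 p1' p2 by auto
qed

end
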